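(* Let $\gamma=\exp(V_\gamma+Z_\gamma)\in H_n$ with $Z_\gamma$ in the center of $\mathfrak h_n$ and $V_\gamma$ orthogonal to the center, and let $\sigma$ be a $\gamma$-periodic magnetic geodesic with $\sigma(0)=e$. If $V_\gamma\neq0$, then $\sigma$ is a one-parameter subgroup which is not central (i.e. $\sigma(t)\notin Z(H_n)$ for some $t$).
   Context: Let $\mathfrak h_n$ be the real Lie algebra with basis $X_1,\dots,X_n,Y_1,\dots,Y_n,Z$ whose only nonzero brackets among basis vectors are $[X_i,Y_i]=Z$, and $H_n$ the simply connected Lie group with Lie algebra $\mathfrak h_n$; $\exp(U)\exp(W)=\exp(U+W+\tfrac12[U,W])$. Fix $A_i>0$; $g$ is the left-invariant metric with orthonormal basis $\{X_i/\sqrt{A_i},Y_i/\sqrt{A_i},Z\}$; the center is $\mathrm{span}\{Z\}$. With $\{\alpha_i,\beta_i,\zeta\}$ the dual basis and $B\in\mathbb R$, $\Omega=d(B\zeta)$; magnetic geodesics solve $\nabla_{\sigma'}\sigma'=F\sigma'$, $g(Fu,v)=\Omega(u,v)$. The magnetic geodesics with $\sigma(0)=e$ are exactly $\sigma(t)=\exp(\sum x_iX_i+\sum y_iY_i+zZ)$ with, for parameters $(u_i,v_i,z_0)$: if $z_0\ne0$, $x_i=\frac{u_i}{z_0}\sin(\frac{z_0t}{A_i})-\frac{v_i}{z_0}(1-\cos(\frac{z_0t}{A_i}))$, $y_i=\frac{u_i}{z_0}(1-\cos(\frac{z_0t}{A_i}))+\frac{v_i}{z_0}\sin(\frac{z_0t}{A_i})$,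 $z=(z_0+B+\sum\frac{u_i^2+v_i^2}{2A_iz_0})t-\sum\frac{u_i^2+v_i^2}{2z_0^2}\sin(\frac{z_0t}{A_i})$; if $z_0=0$, $x_i=u_it/A_i$, $y_i=v_it/A_i$, $z=Bt$. Such $\sigma$ is a one-parameter subgroup iff $z_0=0$ or all $u_i=v_i=0$. For $\gamma\neq e$, $\sigma$ is $\gamma$-periodic with period $\omega\ne0$ if $\gamma\sigma(t)=\sigma(t+\omega)$ for all $t$. *)

theory Defs
  imports "HOL-Analysis.Analysis"
begin

text \<open>The Heisenberg group H_n is identified with its Lie algebra h_n via exp
(a global diffeomorphism).  An element exp(sum x_i X_i + sum y_i Y_i + z Z) is
represented by the triple (x, y, z), with x, y indexed by a finite type 'n
(so n = CARD('n)).\<close>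

type_synonym 'n heis = "(real^'n) \<times> (real^'n) \<times> real"

definition heis_e :: "'n::finite heis" where
  "heis_e = (0, 0, 0)"

text \<open>Group law: exp(U)exp(W) = exp(U + W + 1/2 [U,W]),
with [U,W] = (sum_i (u_i w'_i - u'_i w_i)) Z.\<close>
definition heis_mult :: "'n::finite heis \<Rightarrow> 'n heis \<Rightarrow> 'n heis" where
  "heis_mult g h = (case g of (x, y, z) \<Rightarrow> case h of (x', y', z') \<Rightarrow>
     (x + x', y + y', z + z' + (1/2) * (\<Sum>i\<in>UNIV. x $ i * y' $ i - y $ i * x' $ i)))"

definition heis_center :: "'n::finite heis set" where
  "heis_center = {g. \<forall>h. heis_mult g h = heis_mult h g}"

definition one_param_subgroup :: "(real \<Rightarrow> 'n::finite heis) \<Rightarrow> bool" where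
  "one_param_subgroup \<sigma> \<longleftrightarrow> continuous_on UNIV \<sigma> \<and>
     (\<forall>s t. \<sigma> (s + t) = heis_mult (\<sigma> s) (\<sigma> t))"

text \<open>The explicit magnetic geodesic with parameters (u, v, z0), for metric
constants A and magnetic strength B.\<close>
definition mag_curve :: "real^'n \<Rightarrow> real \<Rightarrow> real^'n::finite \<Rightarrow> real^'n \<Rightarrow> real \<Rightarrow> real \<Rightarrow> 'n heis" where
  "mag_curve A B u v z0 t =
    (if z0 \<noteq> 0 then
      ((\<chi> i. u $ i / z0 * sin (z0 * t / A $ i) - v $ i / z0 * (1 - cos (z0 * t / A $ i))),
       (\<chi> i. u $ i / z0 * (1 - cos (z0 * t / A $ i)) + v $ i / z0 * sin (z0 * t / A $ i)),
       (z0 + B + (\<Sum>i\<in>UNIV. (u $ i ^ 2 + v $ i ^ 2) / (2 * A $ i * z0))) * t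
         - (\<Sum>i\<in>UNIV. (u $ i ^ 2 + v $ i ^ 2) / (2 * z0 ^ 2) * sin (z0 * t / A $ i)))
     else
      ((\<chi> i. u $ i * t / A $ i), (\<chi> i. v $ i * t / A $ i), B * t))"

text \<open>Magnetic geodesics through the identity e (the context states that these are
exactly the curves above).\<close>
definition mag_geodesic_at_e :: "real^'n::finite \<Rightarrow> real \<Rightarrow> (real \<Rightarrow> 'n heis) \<Rightarrow> bool" where
  "mag_geodesic_at_e A B \<sigma> \<longleftrightarrow> (\<exists>u v z0. \<sigma> = mag_curve A B u v z0)"

definition gamma_periodic :: "'n::finite heis \<Rightarrow> (real \<Rightarrow> 'n heis) \<Rightarrow> bool" where
  "gamma_periodic \<gamma> \<sigma> \<longleftrightarrow> \<gamma> \<noteq> heis_e \<and>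
     (\<exists>\<omega>. \<omega> \<noteq> 0 \<and> (\<forall>t. heis_mult \<gamma> (\<sigma> t) = \<sigma> (t + \<omega>)))"

end

theory Submission
  imports Defs
begin

lemma incr_bounded_zero:
  fixes f :: "real \<Rightarrow> real"
  assumes inc: "\<And>t. f (t + w) = g + f t" and bd: "\<And>t. \<bar>f t\<bar> \<le> M"
  shows "g = 0"
proof (rule ccontr)
  assume g: "g \<noteq> 0"
  have n: "f (real n * w) = real n * g + f 0" for n :: nat
  proof (induction n)
    case 0 then show ?case by simp
  next
    case (Suc n)
    have "f (real (Suc n) * w) = f (real n * w + w)" by (simp add: algebra_simps)
    also have "\<dots> = g + f (real n * w)" by (rule inc)
    finally show ?case using Suc by (simp add: algebra_simps)
  qed
  obtain n :: nat where nn: "2 * M / \<bar>g\<bar> < real n" using reals_Archimedean2 by blast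
  have "\<bar>real n * g\<bar> \<le> 2 * M"
    using n[of n] bd[of "real n * w"] bd[of 0] by linarith
  hence "real n * \<bar>g\<bar> \<le> 2 * M" by (simp add: abs_mult)
  moreover have "2 * M < real n * \<bar>g\<bar>" using nn g by (simp add: field_simps)
  ultimately show False by linarith
qed

lemma sin_cos_bd:
  fixes a b c d :: real
  shows "\<bar>a * sin c - b * (1 - cos d)\<bar> \<le> \<bar>a\<bar> + 2 * \<bar>b\<bar>"
    and "\<bar>a * (1 - cos d) + b * sin c\<bar> \<le> 2 * \<bar>a\<bar> + \<bar>b\<bar>"
proof -
  have s: "\<bar>sin c\<bar> \<le> 1" by simp
  have cc: "\<bar>1 - cos d\<bar> \<le> 2" using abs_cos_le_one[of d] by linarith
  have "\<bar>a * sin c\<bar> \<le> \<bar>a\<bar>" using s by (simp add: abs_mult mult_left_le)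
  moreover have "\<bar>b * (1 - cos d)\<bar> \<le> 2 * \<bar>b\<bar>" using cc
    by (metis abs_ge_zero abs_mult mult.commute mult_right_mono)
  moreover have "\<bar>a * (1 - cos d)\<bar> \<le> 2 * \<bar>a\<bar>" using cc
    by (metis abs_ge_zero abs_mult mult.commute mult_right_mono)
  moreover have "\<bar>b * sin c\<bar> \<le> \<bar>b\<bar>" using s by (simp add: abs_mult mult_left_le)
  ultimately show "\<bar>a * sin c - b * (1 - cos d)\<bar> \<le> \<bar>a\<bar> + 2 * \<bar>b\<bar>"
    and "\<bar>a * (1 - cos d) + b * sin c\<bar> \<le> 2 * \<bar>a\<bar> + \<bar>b\<bar>" by linarith+
qed

theorem lemma4p2:
  fixes A :: "real^'n::finite" and B :: real
    and \<gamma> :: "'n heis" and \<sigma> :: "real \<Rightarrow> 'n heis"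
  assumes "\<forall>i. A $ i > 0"
    and "mag_geodesic_at_e A B \<sigma>"
    and "gamma_periodic \<gamma> \<sigma>"
    and "(fst \<gamma>, fst (snd \<gamma>)) \<noteq> (0, 0)"
  shows "one_param_subgroup \<sigma> \<and> (\<exists>t. \<sigma> t \<notin> heis_center)"
proof -
  obtain u v z0 where sig: "\<sigma> = mag_curve A B u v z0"
    using assms(2) unfolding mag_geodesic_at_e_def by blast
  obtain w where w0: "w \<noteq> 0" and per: "\<And>t. heis_mult \<gamma> (\<sigma> t) = \<sigma> (t + w)"
    using assms(3) unfolding gamma_periodic_def by blast
  obtain gx gy gz where gam: "\<gamma> = (gx, gy, gz)" by (cases \<gamma>) auto
  have fx: "fst (heis_mult \<gamma> h) = gx + fst h" for h
    by (cases h) (simp add: heis_mult_def gam)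
  have fy: "fst (snd (heis_mult \<gamma> h)) = gy + fst (snd h)" for h
    by (cases h) (simp add: heis_mult_def gam)
  show ?thesis
  proof (cases "z0 = 0")
    case False
    have "gx $ i = 0 \<and> gy $ i = 0" for i
    proof
      show "gx $ i = 0"
      proof (rule incr_bounded_zero[where f = "\<lambda>t. fst (\<sigma> t) $ i" and w = w])
        fix t
        show "fst (\<sigma> (t + w)) $ i = gx $ i + fst (\<sigma> t) $ i"
          using fx[of "\<sigma> t"] per[of t] by simp
        have "\<bar>u $ i * sin (z0 * t / A $ i) - v $ i * (1 - cos (z0 * t / A $ i))\<bar> / \<bar>z0\<bar>
              \<le> (\<bar>u $ i\<bar> + 2 * \<bar>v $ i\<bar>) / \<bar>z0\<bar>"
          using sin_cos_bd(1) by (simp add: divide_right_mono)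
        then show "\<bar>fst (\<sigma> t) $ i\<bar> \<le> (\<bar>u $ i\<bar> + 2 * \<bar>v $ i\<bar>) / \<bar>z0\<bar>"
          using False by (simp add: sig mag_curve_def diff_divide_distrib[symmetric])
      qed
      show "gy $ i = 0"
      proof (rule incr_bounded_zero[where f = "\<lambda>t. fst (snd (\<sigma> t)) $ i" and w = w])
        fix t
        show "fst (snd (\<sigma> (t + w))) $ i = gy $ i + fst (snd (\<sigma> t)) $ i"
          using fy[of "\<sigma> t"] per[of t] by simp
        have "\<bar>u $ i * (1 - cos (z0 * t / A $ i)) + v $ i * sin (z0 * t / A $ i)\<bar> / \<bar>z0\<bar>
              \<le> (2 * \<bar>u $ i\<bar> + \<bar>v $ i\<bar>) / \<bar>z0\<bar>"
          using sin_cos_bd(2) by (simp add: divide_right_mono)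
        then show "\<bar>fst (snd (\<sigma> t)) $ i\<bar> \<le> (2 * \<bar>u $ i\<bar> + \<bar>v $ i\<bar>) / \<bar>z0\<bar>"
          using False by (simp add: sig mag_curve_def add_divide_distrib[symmetric])
      qed
    qed
    hence "gx = 0" "gy = 0" by (auto simp: vec_eq_iff)
    with assms(4) gam show ?thesis by simp
  next
    case True
    have sig2: "\<sigma> t = ((\<chi> i. u $ i * t / A $ i), (\<chi> i. v $ i * t / A $ i), B * t)" for t
      by (simp add: sig mag_curve_def True)
    have hom: "\<sigma> (s + t) = heis_mult (\<sigma> s) (\<sigma> t)" for s t
      unfolding sig2 heis_mult_def
      by (simp add: vec_eq_iff algebra_simps add_divide_distrib)
    have cont: "continuous_on UNIV \<sigma>"
      using assms(1) unfolding sig2 by (intro continuous_intros) (metis less_irrefl)+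
    have "\<sigma> 0 = (0, 0, 0)" by (simp add: sig2 vec_eq_iff)
    hence "heis_mult \<gamma> (\<sigma> 0) = \<gamma>" by (simp add: heis_mult_def gam)
    hence gw: "\<gamma> = \<sigma> w" using per[of 0] by simp
    define x where "x = fst (\<sigma> 1)"
    define y where "y = fst (snd (\<sigma> 1))"
    have "(x, y) \<noteq> (0, 0)"
    proof
      assume "(x, y) = (0, 0)"
      hence "u $ i = 0 \<and> v $ i = 0" for i
        using assms(1) by (auto simp: x_def y_def sig2 vec_eq_iff) (metis less_irrefl)+
      hence "gx = 0 \<and> gy = 0" using gw gam by (simp add: sig2 vec_eq_iff)
      with assms(4) gam show False by simp
    qed
    then obtain j where j: "x $ j \<noteq> 0 \<or> y $ j \<noteq> 0" by (auto simp: vec_eq_iff)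
    have "\<sigma> 1 \<notin> heis_center"
    proof
      assume "\<sigma> 1 \<in> heis_center"
      hence c: "heis_mult (\<sigma> 1) (- y, x, 0) = heis_mult (- y, x, 0) (\<sigma> 1)"
        unfolding heis_center_def by blast
      obtain z where s1: "\<sigma> 1 = (x, y, z)" by (metis prod.collapse x_def y_def)
      have "(\<Sum>i\<in>UNIV. x $ i * x $ i - y $ i * - y $ i) = (\<Sum>i\<in>UNIV. - y $ i * y $ i - x $ i * x $ i)"
        using c by (simp add: s1 heis_mult_def)
      moreover have "(\<Sum>i\<in>UNIV. x $ i * x $ i - y $ i * - y $ i) = (\<Sum>i\<in>UNIV. x $ i ^ 2 + y $ i ^ 2)"
        by (rule sum.cong) (auto simp: power2_eq_square)
      moreover have "(\<Sum>i\<in>UNIV. - y $ i * y $ i - x $ i * x $ i) = - (\<Sum>i\<in>UNIV. x $ i ^ 2 + y $ i ^ 2)"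
        by (simp add: sum_negf[symmetric] power2_eq_square algebra_simps) (rule sum.cong, auto)
      ultimately have "(\<Sum>i\<in>UNIV. x $ i ^ 2 + y $ i ^ 2) = 0" by linarith
      hence "x $ j ^ 2 + y $ j ^ 2 = 0"
        by (subst (asm) sum_nonneg_eq_0_iff) auto
      with j show False by (simp add: add_nonneg_eq_0_iff)
    qed
    then show ?thesis using hom cont unfolding one_param_subgroup_def by blast
  qed
qed

end
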